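(* Let $a,b\in\mathbb R$, $\sigma\in(0,1]$ and $t\in[0,1]$. Then \[ \delta\big((1-t)\gamma_{a,\sigma}+t\gamma_{b,\sigma}\big)\le\frac14\big(\sigma^{-1}-1\big)^2-(1-t)\log(1-t)-t\log t, \] with the convention $0\log 0=0$.
   Context: On $\mathbb R$, $\gamma_{a,s}$ denotes the Gaussian measure with mean $a$ and variance $s$, and $\gamma=\gamma_{0,1}$. For a probability measure $\mu$ with density $f=d\mu/d\gamma$, $\delta(\mu)=\frac12\int|f'/f|^2d\mu-\int\log f\,d\mu$ is the log-Sobolev deficit. *)

theory Defs
  imports "HOL-Probability.Probability"
begin

text \<open>Lebesgue density of the Gaussian measure with mean a and VARIANCE s.\<close>
definition gauss_density :: "real \<Rightarrow> real \<Rightarrow> real \<Rightarrow> real" where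
  "gauss_density a s x = normal_density a (sqrt s) x"

definition std_gauss :: "real measure" where
  "std_gauss = density lborel (\<lambda>x. ennreal (std_normal_density x))"

text \<open>Log-Sobolev deficit of the probability measure mu with density f = d mu / d gamma:
  delta = 1/2 int |f'/f|^2 d mu - int log f d mu, where d mu = f d gamma.\<close>
definition ls_deficit :: "(real \<Rightarrow> real) \<Rightarrow> real" where
  "ls_deficit f =
     (1/2) * (\<integral>x. (deriv f x / f x)\<^sup>2 * f x \<partial>std_gauss)
     - (\<integral>x. ln (f x) * f x \<partial>std_gauss)"

definition xlnx :: "real \<Rightarrow> real" where
  "xlnx x = (if x = 0 then 0 else x * ln x)"

end

theory Submission
  imports Defs
begin

definition Ug :: "real \<Rightarrow> real \<Rightarrow> real \<Rightarrow> real" where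
  "Ug s a x = exp (- ((x - a)\<^sup>2) / (2 * s) + x\<^sup>2 / 2) / sqrt s"

lemma nd_quad:
  assumes s: "0 < s"
  shows "has_bochner_integral lborel (\<lambda>x. normal_density a (sqrt s) x * (c2*x ^ 2+c1*x+c0))
           (c2*(s+a ^ 2)+c1*a+c0)"
proof -
  have sq: "0 < sqrt s" using s by simp
  have h1: "has_bochner_integral lborel (\<lambda>x. normal_density a (sqrt s) x * (x - a) ^ (2 * 1)) s"
    using normal_moment_even[OF sq, where k=1 and \<mu>=a] s by simp
  have h2: "has_bochner_integral lborel (\<lambda>x. normal_density a (sqrt s) x * x) a"
    using normal_moment_nz_1[OF sq] .
  have h3: "has_bochner_integral lborel (\<lambda>x. normal_density a (sqrt s) x) 1"
    using integrable_normal_density[OF sq] integral_normal_density[OF sq]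
    by (simp add: has_bochner_integral_iff)
  have "has_bochner_integral lborel (\<lambda>x. c2 * (normal_density a (sqrt s) x * (x - a) ^ (2 * 1))
      + (2*a*c2+c1) * (normal_density a (sqrt s) x * x) + (c0 - c2*a ^ 2) * normal_density a (sqrt s) x)
      (c2 * s + (2*a*c2+c1)*a + (c0 - c2*a ^ 2) * 1)"
    by (intro has_bochner_integral_add has_bochner_integral_mult_right h1 h2 h3)
  moreover have "(\<lambda>x. c2 * (normal_density a (sqrt s) x * (x - a) ^ (2 * 1))
      + (2*a*c2+c1) * (normal_density a (sqrt s) x * x) + (c0 - c2*a ^ 2) * normal_density a (sqrt s) x)
     = (\<lambda>x. normal_density a (sqrt s) x * (c2*x ^ 2+c1*x+c0))"
    by (rule ext) (simp add: power2_eq_square algebra_simps)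
  moreover have "c2 * s + (2*a*c2+c1)*a + (c0 - c2*a ^ 2) * 1 = c2*(s+a ^ 2)+c1*a+c0"
    by (simp add: power2_eq_square algebra_simps)
  ultimately show ?thesis by metis
qed

lemma U_pos: "0 < s \<Longrightarrow> 0 < Ug s a x"
  by (simp add: Ug_def)

lemma std_U: assumes s: "0 < s"
  shows "std_normal_density x * Ug s a x = normal_density a (sqrt s) x"
proof -
  have "std_normal_density x * Ug s a x
      = (1 / sqrt (2 * pi)) * (1 / sqrt s) * (exp (- x\<^sup>2 / 2) * exp (- ((x - a)\<^sup>2) / (2 * s) + x\<^sup>2 / 2))"
    by (simp add: std_normal_density_def Ug_def)
  also have "exp (- x\<^sup>2 / 2) * exp (- ((x - a)\<^sup>2) / (2 * s) + x\<^sup>2 / 2) = exp (- ((x - a) ^ 2)/(2 * s))"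
    by (simp add: exp_add[symmetric])
  finally show ?thesis using s
    by (simp add: normal_density_def real_sqrt_mult)
qed

lemma ln_U: "0 < s \<Longrightarrow> ln (Ug s a x) = (- ((x - a) ^ 2)/(2 * s) + x ^ 2/2) - ln (sqrt s)"
  by (simp add: Ug_def ln_div)

lemma U_quad:
  assumes s: "0 < s" and P: "\<And>x. P x = c2*x ^ 2+c1*x+c0"
  shows "has_bochner_integral std_gauss (\<lambda>x. Ug s a x * P x) (c2*(s+a ^ 2)+c1*a+c0)"
  unfolding std_gauss_def
proof (rule has_bochner_integral_density)
  show "(\<lambda>x. Ug s a x * P x) \<in> borel_measurable lborel"
    unfolding P Ug_def by measurable
  show "std_normal_density \<in> borel_measurable lborel" by simp
  show "AE x in lborel. 0 \<le> std_normal_density x" by simp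
  have "(\<lambda>x. std_normal_density x *\<^sub>R (Ug s a x * P x)) = (\<lambda>x. normal_density a (sqrt s) x * (c2*x ^ 2+c1*x+c0))"
    by (rule ext) (simp add: std_U[OF s, symmetric] P)
  then show "has_bochner_integral lborel (\<lambda>x. std_normal_density x *\<^sub>R (Ug s a x * P x)) (c2*(s+a ^ 2)+c1*a+c0)"
    using nd_quad[OF s] by simp
qed


lemma sets_std_gauss[measurable_cong]: "sets std_gauss = sets borel"
  by (simp add: std_gauss_def)

lemma space_std_gauss[simp]: "space std_gauss = UNIV"
  by (simp add: std_gauss_def)

lemma fisher_pt:
  fixes A B C D :: real
  assumes "0 \<le> C" "0 \<le> D" "0 < C + D"
  shows "(A*C + B*D)^2 / (C + D) \<le> A^2*C + B^2*D"
proof -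
  have "(A^2*C + B^2*D) * (C + D) - (A*C + B*D)^2 = C*D*(A-B)^2"
    by (simp add: power2_eq_square algebra_simps)
  moreover have "0 \<le> C*D*(A-B)^2" using assms by simp
  ultimately have "(A*C + B*D)^2 \<le> (A^2*C + B^2*D) * (C + D)" by linarith
  then show ?thesis using assms(3) by (simp add: divide_le_eq)
qed

lemma ln_le_quad:
  fixes s :: real assumes "0 < s" "s \<le> 1"
  shows "ln s \<le> (s - 1) - (s - 1)^2/2"
proof -
  let ?h = "\<lambda>x::real. ln x - ((x - 1) - (x - 1)^2/2)"
  have "?h s \<le> ?h 1"
  proof (rule DERIV_nonneg_imp_nondecreasing[OF assms(2)])
    fix x assume x: "s \<le> x" "x \<le> 1"
    then have xp: "0 < x" using assms by simp
    have "DERIV ?h x :> (1/x - (1 - (2 * (x - 1)) / 2))"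
      using xp by (auto intro!: derivative_eq_intros)
    moreover have "1/x - (1 - (2 * (x - 1)) / 2) = (1 - x)^2 / x"
      using xp by (simp add: field_simps power2_eq_square)
    moreover have "0 \<le> (1 - x)^2 / x" using xp by simp
    ultimately show "\<exists>y. DERIV ?h x :> y \<and> y \<ge> 0" by metis
  qed
  then show ?thesis by simp
qed

lemma const_bound:
  fixes s :: real assumes s: "0 < s" "s \<le> 1"
  shows "(1 - s + s * ln s) / (2 * s) \<le> (1/4) * (1/s - 1)^2"
proof -
  define e where "e = 1 - s"
  have e: "0 \<le> e" "e < 1" "s = 1 - e" using s by (auto simp: e_def)
  have "s * ln s \<le> s * ((s - 1) - (s - 1)^2/2)"
    using ln_le_quad[OF s] s by (simp add: mult_left_mono)
  moreover have "1 - s + s * ((s - 1) - (s - 1)^2/2) = e^2*(1+e)/2"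
    by (simp add: e_def power2_eq_square field_simps)
  ultimately have "1 - s + s * ln s \<le> e^2*(1+e)/2" by linarith
  then have "(1 - s + s * ln s) / (2 * s) \<le> (e^2*(1+e)/2) / (2 * s)"
    using s by (intro divide_right_mono) auto
  also have "\<dots> \<le> (1/4) * (1/s - 1)^2"
  proof -
    have "1/s - 1 = e / s" using s by (simp add: e_def field_simps)
    then have "(1/4) * (1/s - 1)^2 = e^2 / (4 * s^2)" by (simp add: power_divide)
    moreover have "(e^2*(1+e)/2) / (2 * s) = e^2 * ((1+e) * s) / (4 * s^2)"
      using s by (simp add: field_simps power2_eq_square)
    moreover have "e^2 * ((1+e) * s) \<le> e^2"
    proof -
      have "(1+e)* s = 1 - e^2" by (simp add: e_def power2_eq_square algebra_simps)
      then show ?thesis using e by (simp add: mult_left_le)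
    qed
    ultimately show ?thesis using s by (simp add: divide_right_mono)
  qed
  finally show ?thesis .
qed


definition dd :: "real \<Rightarrow> real \<Rightarrow> real \<Rightarrow> real" where
  "dd s a x = x - (x - a) / s"

lemma Ug_deriv:
  assumes s: "0 < s"
  shows "((\<lambda>x. Ug s a x) has_real_derivative (dd s a x * Ug s a x)) (at x)"
proof -
  have "((\<lambda>x. exp (- ((x - a)\<^sup>2) / (2 * s) + x\<^sup>2 / 2)) has_real_derivative
     exp (- ((x - a)\<^sup>2) / (2 * s) + x\<^sup>2 / 2) * dd s a x) (at x)"
    using s by (auto intro!: derivative_eq_intros simp: dd_def field_simps power2_eq_square)
  from DERIV_cdivide[OF this, of "sqrt s"] show ?thesis
    by (simp add: Ug_def mult.commute)
qed

lemma ent_pt: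
  fixes w u F :: real
  assumes "0 \<le> w" "0 < u" "w * u \<le> F"
  shows "w * u * (ln w + ln u) \<le> w * u * ln F"
proof (cases "w = 0")
  case True then show ?thesis by simp
next
  case False
  then have wp: "0 < w" using assms by simp
  have wu: "0 < w * u" using wp assms by simp
  then have "0 < F" using assms by linarith
  then have "ln (w * u) \<le> ln F" using wu assms by simp
  then have "ln w + ln u \<le> ln F" using wp assms by (simp add: ln_mult)
  then show ?thesis using wp assms by (simp add: mult_left_mono)
qed

lemma int_R:
  assumes s: "0 < s"
  shows "has_bochner_integral std_gauss (\<lambda>x. Ug s c x * (dd s c x)\<^sup>2)
     ((1 - 1/s)\<^sup>2 * (s + c\<^sup>2) + (2 * (1 - 1/s) * c / s) * c + (c / s)\<^sup>2)"
  by (rule U_quad[OF s]) (use s in \<open>simp add: dd_def power2_eq_square field_simps\<close>)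

lemma int_L:
  assumes s: "0 < s"
  shows "has_bochner_integral std_gauss
     (\<lambda>x. Ug s c x * (ln w + (- ((x - c)\<^sup>2) / (2 * s) + x\<^sup>2 / 2) - ln (sqrt s)))
     ((1/2 - 1/(2 * s)) * (s + c\<^sup>2) + (c / s) * c + (- (c\<^sup>2) / (2 * s) + ln w - ln (sqrt s)))"
  by (rule U_quad[OF s]) (use s in \<open>simp add: power2_eq_square field_simps\<close>)

lemma abs_lnU:
  assumes s: "0 < s"
  shows "\<bar>ln (Ug s c x)\<bar> \<le> (x\<^sup>2 + c\<^sup>2) / s + x\<^sup>2 / 2 + \<bar>ln (sqrt s)\<bar>"
proof -
  have "(x - c)\<^sup>2 \<le> 2 * (x\<^sup>2 + c\<^sup>2)"
  proof -
    have "2 * (x\<^sup>2 + c\<^sup>2) - (x - c)\<^sup>2 = (x + c)\<^sup>2" by (simp add: power2_eq_square algebra_simps)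
    then show ?thesis by (metis diff_ge_0_iff_ge zero_le_power2)
  qed
  then have "(x - c)\<^sup>2 / (2 * s) \<le> 2 * (x\<^sup>2 + c\<^sup>2) / (2 * s)"
    using s by (intro divide_right_mono) auto
  moreover have "2 * (x\<^sup>2 + c\<^sup>2) / (2 * s) = (x\<^sup>2 + c\<^sup>2) / s"
    using s by (simp only: mult_divide_mult_cancel_left_if) simp
  ultimately have h: "(x - c)\<^sup>2 / (2 * s) \<le> (x\<^sup>2 + c\<^sup>2) / s"
    by simp
  have "\<bar>ln (Ug s c x)\<bar> = \<bar>- ((x - c)\<^sup>2) / (2 * s) + x\<^sup>2 / 2 - ln (sqrt s)\<bar>"
    using ln_U[OF s] by simp
  also have "\<dots> \<le> (x - c)\<^sup>2 / (2 * s) + x\<^sup>2 / 2 + \<bar>ln (sqrt s)\<bar>"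
  proof -
    have "0 \<le> (x - c)\<^sup>2 / (2 * s)" "0 \<le> x\<^sup>2 / 2" using s by auto
    then show ?thesis
      using abs_ge_self[of "ln (sqrt s)"] abs_ge_minus_self[of "ln (sqrt s)"]
      unfolding abs_le_iff by linarith
  qed
  finally show ?thesis using h by linarith
qed


theorem lemma2:
  fixes a b \<sigma> t :: real
  assumes "0 < \<sigma>" "\<sigma> \<le> 1" "0 \<le> t" "t \<le> 1"
  shows "ls_deficit (\<lambda>x. ((1 - t) * gauss_density a \<sigma> x + t * gauss_density b \<sigma> x)
                          / std_normal_density x)
         \<le> (1/4) * (1/\<sigma> - 1)\<^sup>2 - xlnx (1 - t) - xlnx t"
proof -
  have s: "0 < \<sigma>" using assms by simp
  have t0: "0 \<le> 1 - t" "0 \<le> t" using assms by auto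
  define f where "f = (\<lambda>x. (1 - t) * Ug \<sigma> a x + t * Ug \<sigma> b x)"
  define f' where "f' = (\<lambda>x. (1 - t) * (dd \<sigma> a x * Ug \<sigma> a x) + t * (dd \<sigma> b x * Ug \<sigma> b x))"
  have gd: "\<And>c x. gauss_density c \<sigma> x = std_normal_density x * Ug \<sigma> c x"
    using std_U[OF s] by (simp add: gauss_density_def)
  have stdpos: "\<And>x. 0 < std_normal_density x" by (simp add: normal_density_pos)
  have feq: "(\<lambda>x. ((1 - t) * gauss_density a \<sigma> x + t * gauss_density b \<sigma> x) / std_normal_density x) = f"
  proof (rule ext)
    fix x
    have "std_normal_density x \<noteq> 0" using stdpos[of x] by simp
    then show "((1 - t) * gauss_density a \<sigma> x + t * gauss_density b \<sigma> x) / std_normal_density x = f x"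
      by (simp add: gd f_def field_simps)
  qed
  have fder: "\<And>x. (f has_real_derivative f' x) (at x)"
    unfolding f_def f'_def by (intro DERIV_add DERIV_cmult Ug_deriv[OF s])
  have dereq: "\<And>x. deriv f x = f' x" using fder by (rule DERIV_imp_deriv)
  have Upos: "\<And>c x. 0 < Ug \<sigma> c x" using U_pos[OF s] by blast
  have fpos: "\<And>x. 0 < f x"
  proof -
    fix x
    show "0 < f x"
    proof (cases "t < 1")
      case True
      then have "0 < (1 - t) * Ug \<sigma> a x" using Upos by simp
      moreover have "0 \<le> t * Ug \<sigma> b x" using Upos[of b x] t0 by simp
      ultimately show ?thesis by (simp add: f_def)
    next
      case False
      then have "t = 1" using assms by simp
      then show ?thesis using Upos by (simp add: f_def)
    qed
  qed
  define F where "F = (\<lambda>x. (f' x / f x)\<^sup>2 * f x)"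
  define Ent where "Ent = (\<lambda>x. ln (f x) * f x)"
  have ls: "ls_deficit (\<lambda>x. ((1 - t) * gauss_density a \<sigma> x + t * gauss_density b \<sigma> x)
                          / std_normal_density x)
     = 1/2 * integral\<^sup>L std_gauss F - integral\<^sup>L std_gauss Ent"
    unfolding feq ls_deficit_def F_def Ent_def dereq ..
  define R1 where "R1 = (\<lambda>x. (1 - t) * (Ug \<sigma> a x * (dd \<sigma> a x)\<^sup>2) + t * (Ug \<sigma> b x * (dd \<sigma> b x)\<^sup>2))"
  define L where "L = (\<lambda>x. (1 - t) * (Ug \<sigma> a x * (ln (1 - t) + (- ((x - a)\<^sup>2) / (2 * \<sigma>) + x\<^sup>2 / 2) - ln (sqrt \<sigma>)))
      + t * (Ug \<sigma> b x * (ln t + (- ((x - b)\<^sup>2) / (2 * \<sigma>) + x\<^sup>2 / 2) - ln (sqrt \<sigma>))))"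
  define IR where "IR = (\<lambda>c. (1 - 1/\<sigma>)\<^sup>2 * (\<sigma> + c\<^sup>2) + (2 * (1 - 1/\<sigma>) * c / \<sigma>) * c + (c / \<sigma>)\<^sup>2)"
  define IL where "IL = (\<lambda>c w. (1/2 - 1/(2 * \<sigma>)) * (\<sigma> + c\<^sup>2) + (c / \<sigma>) * c + (- (c\<^sup>2) / (2 * \<sigma>) + ln w - ln (sqrt \<sigma>)))"
  have hR1: "has_bochner_integral std_gauss R1 ((1 - t) * IR a + t * IR b)"
    unfolding R1_def IR_def
    by (intro has_bochner_integral_add has_bochner_integral_mult_right int_R[OF s])
  have hL: "has_bochner_integral std_gauss L ((1 - t) * IL a (1 - t) + t * IL b t)"
    unfolding L_def IL_def
    by (intro has_bochner_integral_add has_bochner_integral_mult_right int_L[OF s])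
  have F_le: "\<And>x. F x \<le> R1 x"
  proof -
    fix x
    have "F x = (f' x)\<^sup>2 / f x" using fpos[of x] by (simp add: F_def power2_eq_square)
    also have "\<dots> = (dd \<sigma> a x * ((1 - t) * Ug \<sigma> a x) + dd \<sigma> b x * (t * Ug \<sigma> b x))\<^sup>2
                   / ((1 - t) * Ug \<sigma> a x + t * Ug \<sigma> b x)"
      by (simp add: f_def f'_def algebra_simps)
    also have "\<dots> \<le> (dd \<sigma> a x)\<^sup>2 * ((1 - t) * Ug \<sigma> a x) + (dd \<sigma> b x)\<^sup>2 * (t * Ug \<sigma> b x)"
      using fpos[of x] Upos[of a x] Upos[of b x] t0
      by (intro fisher_pt) (auto simp: f_def)
    also have "\<dots> = R1 x" by (simp add: R1_def algebra_simps)
    finally show "F x \<le> R1 x" .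
  qed
  have F_nn: "\<And>x. 0 \<le> F x" using fpos unfolding F_def by (metis less_imp_le zero_le_power2 mult_nonneg_nonneg)
  have meas_F: "F \<in> borel_measurable std_gauss"
    unfolding F_def f_def f'_def Ug_def dd_def by measurable
  have intF: "integrable std_gauss F"
    by (rule Bochner_Integration.integrable_bound[OF integrable.intros[OF hR1] meas_F])
       (use F_le F_nn in \<open>auto intro!: AE_I2 intro: order_trans[OF _ abs_ge_self]\<close>)
  have L_le: "\<And>x. L x \<le> Ent x"
  proof -
    fix x
    have e1: "(1 - t) * Ug \<sigma> a x * (ln (1 - t) + ln (Ug \<sigma> a x)) \<le> (1 - t) * Ug \<sigma> a x * ln (f x)"
      using t0 Upos[of a x] Upos[of b x] by (intro ent_pt) (auto simp: f_def)
    have e2: "t * Ug \<sigma> b x * (ln t + ln (Ug \<sigma> b x)) \<le> t * Ug \<sigma> b x * ln (f x)"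
      using t0 Upos[of a x] Upos[of b x] by (intro ent_pt) (auto simp: f_def)
    have "L x = (1 - t) * Ug \<sigma> a x * (ln (1 - t) + ln (Ug \<sigma> a x)) + t * Ug \<sigma> b x * (ln t + ln (Ug \<sigma> b x))"
      by (simp add: L_def ln_U[OF s] field_simps)
    also have "\<dots> \<le> (1 - t) * Ug \<sigma> a x * ln (f x) + t * Ug \<sigma> b x * ln (f x)"
      using e1 e2 by linarith
    also have "\<dots> = Ent x" by (simp add: Ent_def f_def algebra_simps)
    finally show "L x \<le> Ent x" .
  qed
  define K where "K = 2/\<sigma> + 1 + (a\<^sup>2 + b\<^sup>2)/\<sigma> + 2 * \<bar>ln (sqrt \<sigma>)\<bar>"
  define G where "G = (\<lambda>x. Ug \<sigma> a x * (K * x\<^sup>2 + 0 * x + K) + Ug \<sigma> b x * (K * x\<^sup>2 + 0 * x + K))"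
  have intG: "integrable std_gauss G"
  proof -
    have "has_bochner_integral std_gauss G (K * (\<sigma> + a\<^sup>2) + 0 * a + K + (K * (\<sigma> + b\<^sup>2) + 0 * b + K))"
      unfolding G_def by (intro has_bochner_integral_add U_quad[OF s]) auto
    then show ?thesis by (rule integrable.intros)
  qed
  have Ent_bound: "\<And>x. \<bar>Ent x\<bar> \<le> G x"
  proof -
    fix x
    let ?A = "Ug \<sigma> a x" and ?B = "Ug \<sigma> b x"
    have A: "0 < ?A" and B: "0 < ?B" using Upos by auto
    have lnf: "\<bar>ln (f x)\<bar> \<le> \<bar>ln ?A\<bar> + \<bar>ln ?B\<bar>"
    proof (cases "?A \<le> ?B")
      case True
      have "?A \<le> f x"
      proof -
        have "(1 - t) * ?A + t * ?A \<le> (1 - t) * ?A + t * ?B" using True t0 by (simp add: mult_left_mono)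
        then show ?thesis by (simp add: f_def algebra_simps)
      qed
      moreover have "f x \<le> ?B"
      proof -
        have "(1 - t) * ?A + t * ?B \<le> (1 - t) * ?B + t * ?B" using True t0 by (simp add: mult_left_mono)
        then show ?thesis by (simp add: f_def algebra_simps)
      qed
      ultimately have "ln ?A \<le> ln (f x)" "ln (f x) \<le> ln ?B" using A B fpos[of x] by auto
      then show ?thesis by linarith
    next
      case False
      have "?B \<le> f x"
      proof -
        have "(1 - t) * ?B + t * ?B \<le> (1 - t) * ?A + t * ?B" using False t0 by (simp add: mult_left_mono)
        then show ?thesis by (simp add: f_def algebra_simps)
      qed
      moreover have "f x \<le> ?A"
      proof -
        have "(1 - t) * ?A + t * ?B \<le> (1 - t) * ?A + t * ?A" using False t0 by (simp add: mult_left_mono)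
        then show ?thesis by (simp add: f_def algebra_simps)
      qed
      ultimately have "ln ?B \<le> ln (f x)" "ln (f x) \<le> ln ?A" using A B fpos[of x] by auto
      then show ?thesis by linarith
    qed
    have fle: "f x \<le> ?A + ?B"
    proof -
      have "(1 - t) * ?A \<le> ?A" "t * ?B \<le> ?B" using A B assms by (auto simp: mult_left_le_one_le)
      then show ?thesis by (simp add: f_def)
    qed
    have lnsum: "\<bar>ln ?A\<bar> + \<bar>ln ?B\<bar> \<le> K * x\<^sup>2 + K"
    proof -
      have "\<bar>ln ?A\<bar> + \<bar>ln ?B\<bar> \<le> x\<^sup>2 * (2/\<sigma> + 1) + ((a\<^sup>2 + b\<^sup>2)/\<sigma> + 2 * \<bar>ln (sqrt \<sigma>)\<bar>)"
      proof -
        have "(x\<^sup>2 + a\<^sup>2) / \<sigma> + x\<^sup>2 / 2 + \<bar>ln (sqrt \<sigma>)\<bar> + ((x\<^sup>2 + b\<^sup>2) / \<sigma> + x\<^sup>2 / 2 + \<bar>ln (sqrt \<sigma>)\<bar>)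
           = x\<^sup>2 * (2/\<sigma> + 1) + ((a\<^sup>2 + b\<^sup>2)/\<sigma> + 2 * \<bar>ln (sqrt \<sigma>)\<bar>)"
          using s by (simp add: field_simps)
        then show ?thesis using abs_lnU[OF s, of a x] abs_lnU[OF s, of b x] by linarith
      qed
      also have "\<dots> \<le> x\<^sup>2 * K + K"
      proof -
        have "x\<^sup>2 * (2/\<sigma> + 1) \<le> x\<^sup>2 * K"
          using s by (intro mult_left_mono) (auto simp: K_def)
        moreover have "(a\<^sup>2 + b\<^sup>2)/\<sigma> + 2 * \<bar>ln (sqrt \<sigma>)\<bar> \<le> K"
          using s by (simp add: K_def)
        ultimately show ?thesis by linarith
      qed
      finally show ?thesis by (simp add: mult.commute)
    qed
    have "\<bar>Ent x\<bar> = \<bar>ln (f x)\<bar> * f x" using fpos[of x] by (simp add: Ent_def abs_mult)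
    also have "\<dots> \<le> (K * x\<^sup>2 + K) * (?A + ?B)"
      using lnf lnsum fle fpos[of x] by (intro mult_mono) auto
    also have "\<dots> = G x" by (simp add: G_def algebra_simps)
    finally show "\<bar>Ent x\<bar> \<le> G x" .
  qed
  have meas_Ent: "Ent \<in> borel_measurable std_gauss"
    unfolding Ent_def f_def Ug_def by measurable
  have intEnt: "integrable std_gauss Ent"
    by (rule Bochner_Integration.integrable_bound[OF intG meas_Ent])
       (use Ent_bound in \<open>auto intro!: AE_I2 intro: order_trans[OF _ abs_ge_self]\<close>)
  have i1: "integral\<^sup>L std_gauss F \<le> integral\<^sup>L std_gauss R1"
    using intF integrable.intros[OF hR1] F_le by (intro integral_mono) auto
  have i2: "integral\<^sup>L std_gauss L \<le> integral\<^sup>L std_gauss Ent"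
    using intEnt integrable.intros[OF hL] L_le by (intro integral_mono) auto
  have vR: "integral\<^sup>L std_gauss R1 = (1 - t) * IR a + t * IR b"
    using hR1 by (rule has_bochner_integral_integral_eq)
  have vL: "integral\<^sup>L std_gauss L = (1 - t) * IL a (1 - t) + t * IL b t"
    using hL by (rule has_bochner_integral_integral_eq)
  define Dc where "Dc = (1 - \<sigma> + \<sigma> * ln \<sigma>) / (2 * \<sigma>)"
  have key: "\<And>c w. IR c / 2 - IL c w = Dc - ln w"
    using s by (simp add: IR_def IL_def Dc_def ln_sqrt power2_eq_square field_simps)
  have "ls_deficit (\<lambda>x. ((1 - t) * gauss_density a \<sigma> x + t * gauss_density b \<sigma> x)
                          / std_normal_density x)
      \<le> 1/2 * ((1 - t) * IR a + t * IR b) - ((1 - t) * IL a (1 - t) + t * IL b t)"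
  proof -
    have "1/2 * integral\<^sup>L std_gauss F - integral\<^sup>L std_gauss Ent
        \<le> 1/2 * integral\<^sup>L std_gauss R1 - integral\<^sup>L std_gauss L"
      using i1 i2 by linarith
    then show ?thesis unfolding ls vR vL .
  qed
  also have "\<dots> = (1 - t) * (IR a / 2 - IL a (1 - t)) + t * (IR b / 2 - IL b t)"
    by (simp add: field_simps)
  also have "\<dots> = Dc - (1 - t) * ln (1 - t) - t * ln t"
    unfolding key by (simp add: algebra_simps)
  also have "\<dots> \<le> (1/4) * (1/\<sigma> - 1)\<^sup>2 - xlnx (1 - t) - xlnx t"
    using const_bound[OF s assms(2)] by (simp add: Dc_def xlnx_def)
  finally show ?thesis .
qed

end
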